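(* Let $p>q>1$ be relatively prime integers and let $a\ge1$, $b\ge0$ be integers. If a sequence $\mathbf{x}=x_0x_1\cdots$ is $\frac pq$-automatic, then the sequence $(x_{an+b})_{n\ge0}$ is also $\frac pq$-automatic.
   Context: $A_p=\{0,\ldots,p-1\}$; for $w=w_\ell\cdots w_0\in A_p^*$, $\mathrm{val}_{\frac pq}(w)=\sum_{i=0}^{\ell}\frac{w_i}{q}(\frac pq)^i$; $\mathrm{rep}_{\frac pq}(n)$ is the unique word not starting with $0$ with value $n$ ($\mathrm{rep}_{\frac pq}(0)=\varepsilon$). A sequence $\mathbf{x}$ over a finite alphabet $B$ is $\frac pq$-automatic if there is a deterministic finite automaton with output $(Q,q_0,A_p,\delta,\tau:Q\to B)$ with $x_n=\tau(\delta(q_0,\mathrm{rep}_{\frac pq}(n)))$ for all $n\ge0$. *)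

theory Defs
  imports Complex_Main
begin

(* Words w = w_l ... w_0 are lists whose HEAD is the most significant digit w_l;
   the digit w_i (weight (p/q)^i) is  rev w ! i. *)
definition val_pq :: "nat \<Rightarrow> nat \<Rightarrow> nat list \<Rightarrow> real" where
  "val_pq p q w = (\<Sum>i<length w. real (rev w ! i) / real q * (real p / real q) ^ i)"

definition rep_pq :: "nat \<Rightarrow> nat \<Rightarrow> nat \<Rightarrow> nat list" where
  "rep_pq p q n = (THE w. set w \<subseteq> {..<p} \<and> (w = [] \<or> hd w \<noteq> 0) \<and> val_pq p q w = real n)"

(* DFA with output (Q, q0, A_p, delta, tau); states encoded as natural numbers,
   delta extended to words by reading from the most significant digit (foldl). *)
definition pq_automatic :: "nat \<Rightarrow> nat \<Rightarrow> (nat \<Rightarrow> 'b) \<Rightarrow> bool" where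
  "pq_automatic p q x \<longleftrightarrow>
     (\<exists>(Q :: nat set) q0 (\<delta> :: nat \<Rightarrow> nat \<Rightarrow> nat) (\<tau> :: nat \<Rightarrow> 'b).
        finite Q \<and> q0 \<in> Q \<and> (\<forall>s\<in>Q. \<forall>d<p. \<delta> s d \<in> Q) \<and>
        (\<forall>n. x n = \<tau> (foldl \<delta> q0 (rep_pq p q n))))"

end

theory Submission imports Defs "HOL-Library.FuncSet" begin

lemma val_snoc: "val_pq p q (w @ [d]) = real p / real q * val_pq p q w + real d / real q"
proof -
  have "val_pq p q (w @ [d]) = (\<Sum>i<Suc (length w). real ((d # rev w) ! i) / real q * (real p / real q) ^ i)"
    by (simp add: val_pq_def)
  also have "\<dots> = real d / real q + (\<Sum>i<length w. real (rev w ! i) / real q * (real p / real q) ^ Suc i)"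
    by (subst sum.lessThan_Suc_shift) simp
  also have "(\<Sum>i<length w. real (rev w ! i) / real q * (real p / real q) ^ Suc i)
     = real p / real q * val_pq p q w"
    by (simp add: val_pq_def sum_distrib_left mult_ac)
  finally show ?thesis by simp
qed

lemma val_nil[simp]: "val_pq p q [] = 0" by (simp add: val_pq_def)

lemma val_int: "q > 0 \<Longrightarrow> \<exists>A::nat. val_pq p q w * real q ^ length w = real A"
proof (induction w rule: rev_induct)
  case Nil then show ?case by simp
next
  case (snoc d w)
  then obtain A where A: "val_pq p q w * real q ^ length w = real A" by blast
  have "val_pq p q (w @ [d]) * real q ^ length (w @ [d])
      = real p * (val_pq p q w * real q ^ length w) + real d * real q ^ length w"
    using snoc.prems by (simp add: val_snoc field_simps)
  also have "\<dots> = real (p * A + d * q ^ length w)" using A by simp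
  finally show ?case by blast
qed

function R :: "nat \<Rightarrow> nat \<Rightarrow> nat \<Rightarrow> nat list" where
  "R p q n = (if n = 0 \<or> q = 0 \<or> p \<le> q then [] else R p q (q * n div p) @ [q * n mod p])"
  by auto
termination
proof (relation "measure (\<lambda>(p,q,n). n)")
  fix p q n :: nat
  assume h: "\<not> (n = 0 \<or> q = 0 \<or> p \<le> q)"
  have "q * n div p \<le> q * n div (Suc q)" using h by (intro div_le_mono2) auto
  also have "\<dots> < n" using h
    by (simp add: div_less_iff_less_mult)
  finally show "((p, q, q * n div p), p, q, n) \<in> measure (\<lambda>(p, q, n). n)" by simp
qed auto

declare R.simps[simp del]

lemma R0[simp]: "R p q 0 = []" by (simp add: R.simps)

lemma Rsuc: "0 < q \<Longrightarrow> q < p \<Longrightarrow> n > 0 \<Longrightarrow> R p q n = R p q (q * n div p) @ [q * n mod p]"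
  by (subst R.simps) auto

lemma R_props:
  assumes "0 < q" "q < p"
  shows "set (R p q n) \<subseteq> {..<p} \<and> (R p q n = [] \<or> hd (R p q n) \<noteq> 0) \<and> val_pq p q (R p q n) = real n"
proof (induction n rule: less_induct)
  case (less n)
  show ?case
  proof (cases "n = 0")
    case True then show ?thesis by simp
  next
    case False
    define N where "N = q * n div p"
    define d where "d = q * n mod p"
    have eq: "q * n = p * N + d" by (simp add: N_def d_def)
    have Nlt: "N < n"
    proof -
      have "p * N \<le> q * n" using eq by simp
      moreover have "q * n < p * n" using assms False by simp
      ultimately show ?thesis by (metis mult_less_cancel1 le_less_trans not_less_iff_gr_or_eq mult.commute gr_implies_not0)
    qed
    have Rn: "R p q n = R p q N @ [d]" using Rsuc[OF assms] False N_def d_def by simp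
    note IH = less[OF Nlt]
    have dlt: "d < p" using assms by (simp add: d_def)
    have hd: "R p q N @ [d] = [] \<or> hd (R p q N @ [d]) \<noteq> 0"
    proof (cases "N = 0")
      case True
      then have "d = q * n" using eq by simp
      then have "d \<noteq> 0" using False assms by simp
      then show ?thesis using True by simp
    next
      case F: False
      then have "R p q N \<noteq> []" using IH by (metis R0 Nlt gr0I less.IH of_nat_eq_0_iff val_nil)
      then show ?thesis using IH by simp
    qed
    have "val_pq p q (R p q N @ [d]) = real p / real q * real N + real d / real q"
      using IH by (simp add: val_snoc)
    also have "\<dots> = real (p * N + d) / real q" using assms by (simp add: field_simps)
    also have "\<dots> = real n" using eq assms by (metis nonzero_mult_div_cancel_left of_nat_mult of_nat_eq_0_iff not_gr0)
    finally show ?thesis using Rn hd dlt IH by auto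
  qed
qed

lemma R_unique:
  assumes "0 < q" "q < p" "coprime p q"
  shows "set w \<subseteq> {..<p} \<Longrightarrow> (w = [] \<or> hd w \<noteq> 0) \<Longrightarrow> val_pq p q w = real n \<Longrightarrow> w = R p q n"
proof (induction w arbitrary: n rule: rev_induct)
  case Nil then show ?case by simp
next
  case (snoc d w)
  obtain A where A: "val_pq p q w * real q ^ length w = real A" using val_int assms by blast
  have v: "real p * val_pq p q w + real d = real q * real n"
    using snoc.prems(3) assms by (simp add: val_snoc field_simps)
  have "real (p * A + d * q ^ length w) = real (q * n * q ^ length w)"
  proof -
    have "real (p * A + d * q ^ length w) = (real p * val_pq p q w + real d) * real q ^ length w"
      using A by (simp add: algebra_simps flip: A)
    also have "\<dots> = real (q * n * q ^ length w)" using v by simp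
    finally show ?thesis .
  qed
  then have e1: "p * A + d * q ^ length w = q * n * q ^ length w" by (simp only: of_nat_eq_iff)
  have "q ^ length w dvd p * A"
    by (metis e1 dvd_add_left_iff dvd_triv_right dvd_mult_left)
  moreover have "coprime (q ^ length w) p" using assms by (simp add: coprime_commute)
  ultimately have "q ^ length w dvd A" using coprime_dvd_mult_right_iff by blast
  then obtain N where N: "A = q ^ length w * N" by blast
  have vN: "val_pq p q w = real N" using A N assms by simp
  have hw: "w = [] \<or> hd w \<noteq> 0" using snoc.prems(2) by (cases w) auto
  have wN: "w = R p q N" using snoc.IH[OF _ hw vN] snoc.prems(1) by simp
  have eq: "q * n = p * N + d"
  proof -
    have "real (q * n) = real (p * N + d)" using v vN by simp
    then show ?thesis by (simp only: of_nat_eq_iff)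
  qed
  have dlt: "d < p" using snoc.prems(1) by simp
  have npos: "n > 0"
  proof (rule ccontr)
    assume "\<not> n > 0"
    then have "N = 0" "d = 0" using eq assms by auto
    then show False using snoc.prems(2) wN by simp
  qed
  have "q * n div p = N" "q * n mod p = d" using eq dlt by auto
  then show ?case using Rsuc[OF assms(1,2) npos] wN by simp
qed

lemma rep_R:
  assumes "0 < q" "q < p" "coprime p q"
  shows "rep_pq p q n = R p q n"
  unfolding rep_pq_def
  by (rule the_equality) (use R_props[OF assms(1,2)] R_unique[OF assms] in auto)

lemma automatic_from_finite:
  fixes S :: "'c set" and \<Delta> :: "'c \<Rightarrow> nat \<Rightarrow> 'c" and \<tau> :: "'c \<Rightarrow> 'b" and y :: "nat \<Rightarrow> 'b"
  assumes S: "finite S" and zinit: "zinit \<in> S" and cl: "\<forall>s\<in>S. \<forall>d<p. \<Delta> s d \<in> S"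
    and y: "\<forall>n. y n = \<tau> (foldl \<Delta> zinit (rep_pq p q n))"
    and dig: "\<forall>n. set (rep_pq p q n) \<subseteq> {..<p}"
  shows "pq_automatic p q y"
proof -
  obtain h where h: "bij_betw h {0..<card S} S" using ex_bij_betw_nat_finite[OF S] by blast
  define enc where "enc = inv_into {0..<card S} h"
  have he: "h (enc s) = s" if "s \<in> S" for s
    using that h unfolding enc_def by (simp add: bij_betw_def f_inv_into_f)
  have ein: "enc s \<in> {0..<card S}" if "s \<in> S" for s
    using that h unfolding enc_def by (metis bij_betw_def inv_into_into)
  have hin: "h i \<in> S" if "i \<in> {0..<card S}" for i
    using that h by (auto simp: bij_betw_def)
  define \<delta> where "\<delta> i d = enc (\<Delta> (h i) d)" for i d
  have fold: "foldl \<delta> (enc s) w = enc (foldl \<Delta> s w) \<and> foldl \<Delta> s w \<in> S"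
    if "set w \<subseteq> {..<p}" "s \<in> S" for w s
    using that
  proof (induction w arbitrary: s)
    case Nil then show ?case by simp
  next
    case (Cons d w)
    have "\<delta> (enc s) d = enc (\<Delta> s d)" using Cons.prems he by (simp add: \<delta>_def)
    moreover have "\<Delta> s d \<in> S" using cl Cons.prems by auto
    ultimately show ?case using Cons.IH[of "\<Delta> s d"] Cons.prems by simp
  qed
  show ?thesis
    unfolding pq_automatic_def
  proof (intro exI conjI ballI allI impI)
    show "finite {0..<card S}" by simp
    show "enc zinit \<in> {0..<card S}" using ein zinit .
    fix s d assume "s \<in> {0..<card S}" "d < p"
    then show "\<delta> s d \<in> {0..<card S}" using hin cl ein by (simp add: \<delta>_def)
  next
    fix n
    have "y n = \<tau> (h (enc (foldl \<Delta> zinit (rep_pq p q n))))"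
      using y fold[OF dig[rule_format] zinit] he by simp
    also have "\<dots> = (\<tau> \<circ> h) (foldl \<delta> (enc zinit) (rep_pq p q n))"
      using fold[OF dig[rule_format] zinit] by simp
    finally show "y n = (\<tau> \<circ> h) (foldl \<delta> (enc zinit) (rep_pq p q n))" .
  qed
qed

theorem mainTheorem15:
  fixes p q a b :: nat and x :: "nat \<Rightarrow> 'b"
  assumes "q > 1" and "p > q" and "coprime p q"
    and "a \<ge> 1"
    and "finite (range x)"
    and "pq_automatic p q x"
  shows "pq_automatic p q (\<lambda>n. x (a * n + b))"
proof -
  have q0: "0 < q" and qp: "q < p" using assms by auto
  have rep: "rep_pq p q n = R p q n" for n using rep_R[OF q0 qp assms(3)] .
  obtain Q :: "nat set" and s0 \<delta> \<tau> where Q: "finite Q" "s0 \<in> Q" "\<forall>s\<in>Q. \<forall>d<p. \<delta> s d \<in> Q"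
    and x: "\<forall>n. x n = \<tau> (foldl \<delta> s0 (rep_pq p q n))"
    using assms(6) unfolding pq_automatic_def by (elim exE conjE) (rule that; assumption)
  define s where "s n = foldl \<delta> s0 (R p q n)" for n
  have dig: "set (R p q n) \<subseteq> {..<p}" for n using R_props[OF q0 qp] by blast
  have sQ: "foldl \<delta> t w \<in> Q" if "set w \<subseteq> {..<p}" "t \<in> Q" for w t
    using that
  proof (induction w arbitrary: t)
    case (Cons d w) then show ?case using Q(3) by simp
  qed simp
  have sin: "s n \<in> Q" for n unfolding s_def using sQ dig Q(2) by blast
  have srec: "s n = \<delta> (s (q * n div p)) (q * n mod p)" if "n > 0" for n
    unfolding s_def using Rsuc[OF q0 qp that] by simp
  have s0': "s 0 = s0" by (simp add: s_def)
  define B where "B = max b (a * (p - 1))"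
  define S where "S = PiE {..B} (\<lambda>_. Q)"
  define \<Delta> where "\<Delta> f d = (\<lambda>c\<in>{..B}. \<delta> (f ((a * d + q * c) div p)) ((a * d + q * c) mod p))" for f d
  define t0 where "t0 = (\<lambda>c\<in>{..B}. s c)"
  have cle: "(a * d + q * c) div p \<le> B" if "d < p" "c \<le> B" for d c
  proof -
    have "a * d \<le> a * (p - 1)" using that by (intro mult_le_mono2) simp
    also have "\<dots> \<le> B" by (simp add: B_def)
    finally have "a * d + q * c \<le> B + q * B" using that by (simp add: add_mono)
    also have "\<dots> \<le> p * B" using qp by (metis Suc_leI mult_Suc mult_le_mono1 add.commute)
    finally have "(a * d + q * c) div p \<le> p * B div p" by (rule div_le_mono)
    then show ?thesis using qp by simp
  qed
  have main: "foldl \<Delta> t0 (R p q n) = (\<lambda>c\<in>{..B}. s (a * n + c))" for n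
  proof (induction n rule: less_induct)
    case (less n)
    show ?case
    proof (cases "n = 0")
      case True then show ?thesis by (simp add: t0_def)
    next
      case False
      define N where "N = q * n div p"
      define d where "d = q * n mod p"
      have eq: "q * n = p * N + d" by (simp add: N_def d_def)
      have Nlt: "N < n"
      proof -
        have "p * N \<le> q * n" using eq by simp
        moreover have "q * n < p * n" using qp False by simp
        ultimately show ?thesis by (metis mult_less_cancel1 le_less_trans not_less_iff_gr_or_eq mult.commute gr_implies_not0)
      qed
      have dlt: "d < p" using qp by (simp add: d_def)
      have Rn: "R p q n = R p q N @ [d]" using Rsuc[OF q0 qp] False N_def d_def by simp
      have "foldl \<Delta> t0 (R p q n) = \<Delta> (\<lambda>c\<in>{..B}. s (a * N + c)) d"
        using less[OF Nlt] Rn by (simp only: foldl_append foldl.simps)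
      also have "\<dots> = (\<lambda>c\<in>{..B}. s (a * n + c))"
        unfolding \<Delta>_def
      proof (rule restrict_ext)
        fix c assume c: "c \<in> {..B}"
        have e2: "q * (a * n + c) = (a * d + q * c) + (a * N) * p"
          using eq by (simp add: algebra_simps)
        have "s (a * n + c) = \<delta> (s (q * (a * n + c) div p)) (q * (a * n + c) mod p)"
          using False assms(4) by (intro srec) simp
        also have "q * (a * n + c) div p = a * N + (a * d + q * c) div p"
          unfolding e2 using qp by simp
        also have "q * (a * n + c) mod p = (a * d + q * c) mod p"
          unfolding e2 by simp
        finally have "s (a * n + c) = \<delta> (s (a * N + (a * d + q * c) div p)) ((a * d + q * c) mod p)" .
        moreover have "(a * d + q * c) div p \<in> {..B}" using cle dlt c by simp
        ultimately show "\<delta> ((\<lambda>c\<in>{..B}. s (a * N + c)) ((a * d + q * c) div p)) ((a * d + q * c) mod p) = s (a * n + c)"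
          by simp
      qed
      finally show ?thesis .
    qed
  qed
  show ?thesis
  proof (rule automatic_from_finite[where S = S and zinit = t0 and \<Delta> = \<Delta> and \<tau> = "\<lambda>f. \<tau> (f b)"])
    show "finite S" unfolding S_def using Q(1) by (simp add: finite_PiE)
    show "t0 \<in> S" unfolding S_def t0_def using sin by auto
    show "\<forall>s\<in>S. \<forall>d<p. \<Delta> s d \<in> S"
      unfolding S_def \<Delta>_def using cle Q(3) by (auto simp: PiE_iff)
    show "\<forall>n. set (rep_pq p q n) \<subseteq> {..<p}" using dig rep by simp
    show "\<forall>n. x (a * n + b) = \<tau> (foldl \<Delta> t0 (rep_pq p q n) b)"
      using main x rep s_def B_def by simp
  qed
qed

end
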